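(* Let $a,b>0$ and let $\mathcal{M}_{a,b}(s)=\mathbb{E}\left[(\mathbf{B}'_{a,b}+\mathbf{B}'_{a,b})^s\right]$ for real $s$, where the two summands are independent. Then $\mathcal{M}_{a,b}(s)<\infty$ if and only if $s\in(-2a,b)$.
   Context: For $p,q>0$, $\mathbf{B}'_{p,q}$ denotes a beta prime random variable with density $\frac{\Gamma(p+q)}{\Gamma(p)\Gamma(q)}\frac{x^{p-1}}{(1+x)^{p+q}}$ on $(0,\infty)$. *)

theory Defs
  imports "HOL-Probability.Probability"
begin

definition beta_prime_density :: "real \<Rightarrow> real \<Rightarrow> real \<Rightarrow> real" where
  "beta_prime_density p q x =
     (if 0 < x then Gamma (p + q) / (Gamma p * Gamma q) * x powr (p - 1) / (1 + x) powr (p + q)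
      else 0)"

definition beta_prime_measure :: "real \<Rightarrow> real \<Rightarrow> real measure" where
  "beta_prime_measure p q = density lborel (\<lambda>x. ennreal (beta_prime_density p q x))"

text \<open>M_{a,b}(s) = E[(X+Y)^s] with X, Y independent B'_{a,b}: the joint law of (X,Y)
  is the product measure; the expectation of the nonnegative variable is the
  nonnegative (extended) integral.\<close>
definition Mab :: "real \<Rightarrow> real \<Rightarrow> real \<Rightarrow> ennreal" where
  "Mab a b s = (\<integral>\<^sup>+ z. ennreal ((fst z + snd z) powr s)
                  \<partial>(beta_prime_measure a b \<Otimes>\<^sub>M beta_prime_measure a b))"

end

theory Submission
  imports Defs
begin

definition Fb :: "real \<Rightarrow> real \<Rightarrow> real \<Rightarrow> real" where
  "Fb a b x = (if 0 < x then x powr (a-1) / (1+x) powr (a+b) else 0)"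

lemma Fb_meas[measurable]: "Fb a b \<in> borel_measurable borel"
  unfolding Fb_def by measurable

lemma bpd_meas[measurable]: "beta_prime_density a b \<in> borel_measurable borel"
  unfolding beta_prime_density_def by measurable

lemma Fb_nonneg: "0 \<le> Fb a b x"
  unfolding Fb_def by auto

lemma bpd_eq: "beta_prime_density a b x = Gamma (a+b) / (Gamma a * Gamma b) * Fb a b x"
  unfolding beta_prime_density_def Fb_def by auto

definition TT :: "real \<Rightarrow> real \<Rightarrow> real \<Rightarrow> ennreal" where
  "TT a b s = (\<integral>\<^sup>+z. ennreal (Fb a b (fst z) * Fb a b (snd z) * (fst z + snd z) powr s) \<partial>(lborel \<Otimes>\<^sub>M lborel))"

lemma Mab_TT:
  assumes "0 < a" "0 < b"
  shows "Mab a b s = ennreal ((Gamma (a+b) / (Gamma a * Gamma b))^2) * TT a b s"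
proof -
  define C where "C = Gamma (a+b) / (Gamma a * Gamma b)"
  have C: "0 < C" unfolding C_def using assms by (auto intro!: Gamma_real_pos)
  define d where "d = (\<lambda>x. ennreal (beta_prime_density a b x))"
  have dm[measurable]: "d \<in> borel_measurable lborel" unfolding d_def by measurable
  have sf: "sigma_finite_measure (density lborel d)"
    by (subst sigma_finite_measure.sigma_finite_iff_density_finite[OF sigma_finite_lborel]) (auto simp: d_def)
  have "beta_prime_measure a b \<Otimes>\<^sub>M beta_prime_measure a b
      = density (lborel \<Otimes>\<^sub>M lborel) (\<lambda>(x,y). d x * d y)"
    unfolding beta_prime_measure_def d_def[symmetric]
    by (rule pair_measure_density) (auto simp: sf sigma_finite_lborel)
  then have "Mab a b s = (\<integral>\<^sup>+z. (\<lambda>(x,y). d x * d y) z * ennreal ((fst z + snd z) powr s) \<partial>(lborel \<Otimes>\<^sub>M lborel))"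
    unfolding Mab_def by (simp add: nn_integral_density)
  also have "\<dots> = (\<integral>\<^sup>+z. ennreal (C^2) * ennreal (Fb a b (fst z) * Fb a b (snd z) * (fst z + snd z) powr s) \<partial>(lborel \<Otimes>\<^sub>M lborel))"
  proof (intro nn_integral_cong)
    fix z :: "real \<times> real"
    obtain x y where z: "z = (x,y)" by (cases z)
    have "d x * d y * ennreal ((x + y) powr s) = ennreal (C * Fb a b x * (C * Fb a b y) * (x+y) powr s)"
      unfolding d_def bpd_eq C_def[symmetric] using C
      by (simp add: ennreal_mult' ennreal_mult Fb_nonneg)
    also have "\<dots> = ennreal (C^2) * ennreal (Fb a b x * Fb a b y * (x + y) powr s)"
      using C by (simp add: ennreal_mult'[symmetric] Fb_nonneg power2_eq_square algebra_simps)
    finally show "(\<lambda>(x,y). d x * d y) z * ennreal ((fst z + snd z) powr s) = ennreal (C^2) * ennreal (Fb a b (fst z) * Fb a b (snd z) * (fst z + snd z) powr s)"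
      by (simp add: z)
  qed
  also have "\<dots> = ennreal (C^2) * TT a b s"
    unfolding TT_def by (rule nn_integral_cmult) measurable
  finally show ?thesis by (simp add: C_def)
qed




lemma inv_div_1:
  "(\<integral>\<^sup>+x. ennreal (indicator {1..} x * (1/x)) \<partial>lborel) = \<infinity>"
proof (rule ccontr)
  assume ne: "(\<integral>\<^sup>+x. ennreal (indicator {1..} x * (1/x)) \<partial>lborel) \<noteq> \<infinity>"
  then obtain r where r: "(\<integral>\<^sup>+x. ennreal (indicator {1..} x * (1/x)) \<partial>lborel) = ennreal r" "0 \<le> r"
    using ennreal_cases[of "(\<integral>\<^sup>+x. ennreal (indicator {1..} x * (1/x)) \<partial>lborel)"] by auto
  have "ennreal n \<le> ennreal r" for n :: nat
  proof -
    have hi: "((\<lambda>x. 1/x) has_integral (ln (exp (real n)) - ln 1)) {1..exp (real n)}"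
      by (intro fundamental_theorem_of_calculus)
         (auto intro!: derivative_eq_intros simp flip: has_real_derivative_iff_has_vector_derivative
               simp: field_simps)
    have "ennreal n = (\<integral>\<^sup>+x. ennreal (indicator {1..exp (real n)} x * (1/x)) \<partial>lborel)"
      using nn_integral_has_integral_lebesgue[OF _ hi] by simp
    also have "\<dots> \<le> (\<integral>\<^sup>+x. ennreal (indicator {1..} x * (1/x)) \<partial>lborel)"
      by (intro nn_integral_mono) (auto simp: indicator_def)
    finally show ?thesis using r by simp
  qed
  from this[of "nat \<lceil>r\<rceil> + 1"] have "real (nat \<lceil>r\<rceil> + 1) \<le> r"
    by (simp only: ennreal_le_iff[OF r(2)])
  moreover have "r \<le> real (nat \<lceil>r\<rceil>)" using r(2) by linarith
  ultimately show False by simp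
qed

lemma inv_div_0:
  "(\<integral>\<^sup>+x. ennreal (indicator {0<..1} x * (1/x)) \<partial>lborel) = \<infinity>"
proof (rule ccontr)
  assume ne: "(\<integral>\<^sup>+x. ennreal (indicator {0<..1} x * (1/x)) \<partial>lborel) \<noteq> \<infinity>"
  then obtain r where r: "(\<integral>\<^sup>+x. ennreal (indicator {0<..1} x * (1/x)) \<partial>lborel) = ennreal r" "0 \<le> r"
    using ennreal_cases[of "(\<integral>\<^sup>+x. ennreal (indicator {0<..1} x * (1/x)) \<partial>lborel)"] by auto
  have "ennreal n \<le> ennreal r" for n :: nat
  proof -
    have ep: "0 < exp (- real n)" by simp
    have hi: "((\<lambda>x. 1/x) has_integral (ln 1 - ln (exp (- real n)))) {exp (- real n)..1}"
      apply (intro fundamental_theorem_of_calculus)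
      apply (auto intro!: derivative_eq_intros simp flip: has_real_derivative_iff_has_vector_derivative
               simp: field_simps)
      using ep by linarith+
    have "ennreal n = (\<integral>\<^sup>+x. ennreal (indicator {exp (- real n)..1} x * (1/x)) \<partial>lborel)"
    proof -
      have "\<And>x. exp (- real n) \<le> x \<and> x \<le> 1 \<Longrightarrow> 0 \<le> 1/x" using ep by (metis less_le_trans less_imp_le zero_le_divide_1_iff)
      from nn_integral_has_integral_lebesgue[OF _ hi, OF this] show ?thesis by simp
    qed
    also have "\<dots> \<le> (\<integral>\<^sup>+x. ennreal (indicator {0<..1} x * (1/x)) \<partial>lborel)"
      by (intro nn_integral_mono) (auto simp: indicator_def less_le_trans[OF exp_gt_zero])
    finally show ?thesis using r by simp
  qed
  from this[of "nat \<lceil>r\<rceil> + 1"] have "real (nat \<lceil>r\<rceil> + 1) \<le> r"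
    by (simp only: ennreal_le_iff[OF r(2)])
  moreover have "r \<le> real (nat \<lceil>r\<rceil>)" using r(2) by linarith
  ultimately show False by simp
qed


lemma fin1:
  fixes al be :: real
  assumes "0 < al" "al < be"
  shows "(\<integral>\<^sup>+x. ennreal (indicator {0<..} x * (x powr (al-1) / (1+x) powr be)) \<partial>lborel) < \<infinity>"
proof -
  have h1: "((\<lambda>x. x powr (al-1)) has_integral (1 powr (al - 1 + 1) / (al - 1 + 1))) {0..1}"
    using assms by (intro has_integral_powr_from_0) auto
  have h2: "((\<lambda>x. x powr (al-1-be)) has_integral (-(1 powr (al-1-be+1)) / (al-1-be+1))) {1..}"
    using assms by (intro has_integral_powr_to_inf) auto
  have e1: "(\<integral>\<^sup>+x. ennreal (indicator {0..1} x * x powr (al-1)) \<partial>lborel) = ennreal (1 powr (al - 1 + 1) / (al - 1 + 1))"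
    using nn_integral_has_integral_lebesgue[OF _ h1] by simp
  have e2: "(\<integral>\<^sup>+x. ennreal (indicator {1..} x * x powr (al-1-be)) \<partial>lborel) = ennreal (-(1 powr (al-1-be+1)) / (al-1-be+1))"
    using nn_integral_has_integral_lebesgue[OF _ h2] by simp
  have pw: "ennreal (indicator {0<..} x * (x powr (al-1) / (1+x) powr be))
      \<le> ennreal (indicator {0..1} x * x powr (al-1)) + ennreal (indicator {1..} x * x powr (al-1-be))" for x :: real
  proof (cases "0 < x")
    case False then show ?thesis by simp
  next
    case True
    show ?thesis
    proof (cases "x \<le> 1")
      case True
      have "1 \<le> (1+x) powr be" using \<open>0<x\<close> assms by (intro ge_one_powr_ge_zero) auto
      then have "x powr (al-1) / (1+x) powr be \<le> x powr (al-1)"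
      proof -
        have "x powr (al-1) * 1 \<le> x powr (al-1) * (1+x) powr be"
          using \<open>1 \<le> (1+x) powr be\<close> by (intro mult_left_mono) auto
        then show ?thesis using \<open>1 \<le> (1+x) powr be\<close> by (simp add: divide_le_eq)
      qed
      then have "ennreal (indicator {0<..} x * (x powr (al-1) / (1+x) powr be)) \<le> ennreal (indicator {0..1} x * x powr (al-1))"
        using True \<open>0<x\<close> by (auto simp: indicator_def intro: ennreal_leI)
      then show ?thesis by (rule add_increasing2[OF zero_le])
    next
      case False
      have "x powr be \<le> (1+x) powr be" using \<open>0<x\<close> assms by (intro powr_mono2) auto
      then have "x powr (al-1) / (1+x) powr be \<le> x powr (al-1) / x powr be"
        using \<open>0<x\<close> by (intro divide_left_mono) auto
      also have "\<dots> = x powr (al-1-be)" by (simp add: powr_diff)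
      finally have "ennreal (indicator {0<..} x * (x powr (al-1) / (1+x) powr be)) \<le> ennreal (indicator {1..} x * x powr (al-1-be))"
        using False \<open>0<x\<close> by (auto simp: indicator_def intro: ennreal_leI)
      then show ?thesis by (rule add_increasing[OF zero_le])
    qed
  qed
  have "(\<integral>\<^sup>+x. ennreal (indicator {0<..} x * (x powr (al-1) / (1+x) powr be)) \<partial>lborel)
     \<le> (\<integral>\<^sup>+x. ennreal (indicator {0..1} x * x powr (al-1)) + ennreal (indicator {1..} x * x powr (al-1-be)) \<partial>lborel)"
    by (intro nn_integral_mono pw)
  also have "\<dots> = (\<integral>\<^sup>+x. ennreal (indicator {0..1} x * x powr (al-1)) \<partial>lborel) + (\<integral>\<^sup>+x. ennreal (indicator {1..} x * x powr (al-1-be)) \<partial>lborel)"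
    by (intro nn_integral_add) auto
  also have "\<dots> < \<infinity>" unfolding e1 e2 by (simp flip: ennreal_plus)
  finally show ?thesis .
qed


lemma fin_Fp:
  assumes "0 < a" "0 < b" "0 < a + p" "p < b"
  shows "(\<integral>\<^sup>+x. ennreal (Fb a b x * x powr p) \<partial>lborel) < \<infinity>"
proof -
  have "(\<integral>\<^sup>+x. ennreal (Fb a b x * x powr p) \<partial>lborel)
      = (\<integral>\<^sup>+x. ennreal (indicator {0<..} x * (x powr (a+p-1) / (1+x) powr (a+b))) \<partial>lborel)"
    by (intro nn_integral_cong) (auto simp: Fb_def indicator_def powr_add[symmetric] algebra_simps)
  also have "\<dots> < \<infinity>" using assms by (intro fin1) auto
  finally show ?thesis .
qed

lemma fin_P:
  assumes "0 < a" "0 < b" "0 < a + p" "p < b" "0 < a + q" "q < b"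
  shows "(\<integral>\<^sup>+z. ennreal (Fb a b (fst z) * Fb a b (snd z) * fst z powr p * snd z powr q) \<partial>(lborel \<Otimes>\<^sub>M lborel)) < \<infinity>"
proof -
  have "(\<integral>\<^sup>+z. ennreal (Fb a b (fst z) * Fb a b (snd z) * fst z powr p * snd z powr q) \<partial>(lborel \<Otimes>\<^sub>M lborel))
     = (\<integral>\<^sup>+x. \<integral>\<^sup>+y. ennreal (Fb a b x * Fb a b y * x powr p * y powr q) \<partial>lborel \<partial>lborel)"
  proof -
    have m: "(\<lambda>z. ennreal (Fb a b (fst z) * Fb a b (snd z) * fst z powr p * snd z powr q)) \<in> borel_measurable (lborel \<Otimes>\<^sub>M lborel)"
      by measurable
    show ?thesis using sigma_finite_measure.nn_integral_fst[OF sigma_finite_lborel m] by simp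
  qed
  also have "\<dots> = (\<integral>\<^sup>+x. ennreal (Fb a b x * x powr p) * (\<integral>\<^sup>+y. ennreal (Fb a b y * y powr q) \<partial>lborel) \<partial>lborel)"
  proof (intro nn_integral_cong)
    fix x :: real
    have "(\<integral>\<^sup>+y. ennreal (Fb a b x * Fb a b y * x powr p * y powr q) \<partial>lborel)
        = (\<integral>\<^sup>+y. ennreal (Fb a b x * x powr p) * ennreal (Fb a b y * y powr q) \<partial>lborel)"
      by (intro nn_integral_cong) (simp add: ennreal_mult'[symmetric] Fb_nonneg mult_ac)
    also have "\<dots> = ennreal (Fb a b x * x powr p) * (\<integral>\<^sup>+y. ennreal (Fb a b y * y powr q) \<partial>lborel)"
      by (rule nn_integral_cmult) measurable
    finally show "(\<integral>\<^sup>+y. ennreal (Fb a b x * Fb a b y * x powr p * y powr q) \<partial>lborel) = \<dots>" .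
  qed
  also have "\<dots> = (\<integral>\<^sup>+x. ennreal (Fb a b x * x powr p) \<partial>lborel) * (\<integral>\<^sup>+y. ennreal (Fb a b y * y powr q) \<partial>lborel)"
    by (rule nn_integral_multc) measurable
  also have "\<dots> < \<infinity>"
    using fin_Fp[of a b p] fin_Fp[of a b q] assms by (simp add: ennreal_mult_less_top)
  finally show ?thesis .
qed

lemma powr_sum_le:
  fixes x y s :: real
  assumes "0 < x" "0 < y" "0 \<le> s"
  shows "(x + y) powr s \<le> 2 powr s * (x powr s * y powr 0) + 2 powr s * (x powr 0 * y powr s)"
proof (cases "x \<le> y")
  case True
  have "(x + y) powr s \<le> (2 * y) powr s" using assms True by (intro powr_mono2) auto
  also have "\<dots> = 2 powr s * y powr s" using assms by (simp add: powr_mult)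
  finally show ?thesis using assms by (simp add: add_increasing)
next
  case False
  have "(x + y) powr s \<le> (2 * x) powr s" using assms False by (intro powr_mono2) auto
  also have "\<dots> = 2 powr s * x powr s" using assms by (simp add: powr_mult)
  finally show ?thesis using assms by (simp add: add_increasing2)
qed

lemma powr_sum_le_neg:
  fixes x y s :: real
  assumes "0 < x" "0 < y" "s < 0"
  shows "(x + y) powr s \<le> x powr (s/2) * y powr (s/2)"
proof -
  have "(x + y) powr s = (x + y) powr (s/2) * (x + y) powr (s/2)"
    by (simp add: powr_add[symmetric])
  also have "\<dots> \<le> x powr (s/2) * y powr (s/2)"
    using assms by (intro mult_mono powr_mono2') auto
  finally show ?thesis .
qed

lemma TT_fin:
  assumes "0 < a" "0 < b" "-2*a < s" "s < b"
  shows "TT a b s < \<infinity>"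
proof (cases "0 \<le> s")
  case True
  let ?A = "\<lambda>z. ennreal (Fb a b (fst z) * Fb a b (snd z) * fst z powr s * snd z powr 0)"
  let ?B = "\<lambda>z. ennreal (Fb a b (fst z) * Fb a b (snd z) * fst z powr 0 * snd z powr s)"
  have "TT a b s \<le> (\<integral>\<^sup>+z. ennreal (2 powr s) * (?A z + ?B z) \<partial>(lborel \<Otimes>\<^sub>M lborel))"
    unfolding TT_def
  proof (intro nn_integral_mono)
    fix z :: "real \<times> real"
    obtain x y where z: "z = (x,y)" by (cases z)
    show "ennreal (Fb a b (fst z) * Fb a b (snd z) * (fst z + snd z) powr s) \<le> ennreal (2 powr s) * (?A z + ?B z)"
    proof (cases "0 < x \<and> 0 < y")
      case True
      have "Fb a b x * Fb a b y * (x + y) powr s \<le> Fb a b x * Fb a b y * (2 powr s * (x powr s * y powr 0) + 2 powr s * (x powr 0 * y powr s))"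
        using True \<open>0 \<le> s\<close> by (intro mult_left_mono powr_sum_le) (auto simp: Fb_nonneg)
      then show ?thesis unfolding z
        by (simp add: ennreal_mult'[symmetric] ennreal_plus[symmetric] Fb_nonneg algebra_simps del: ennreal_plus)
    next
      case False
      then show ?thesis unfolding z by (auto simp: Fb_def)
    qed
  qed
  also have "\<dots> = ennreal (2 powr s) * (\<integral>\<^sup>+z. (?A z + ?B z) \<partial>(lborel \<Otimes>\<^sub>M lborel))"
    by (rule nn_integral_cmult) measurable
  also have "\<dots> = ennreal (2 powr s) * ((\<integral>\<^sup>+z. ?A z \<partial>(lborel \<Otimes>\<^sub>M lborel)) + (\<integral>\<^sup>+z. ?B z \<partial>(lborel \<Otimes>\<^sub>M lborel)))"
    by (rule arg_cong[where f="\<lambda>u. ennreal (2 powr s) * u"], rule nn_integral_add) measurable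
  also have "\<dots> < \<infinity>"
    using fin_P[of a b s 0] fin_P[of a b 0 s] assms True by (simp add: ennreal_mult_less_top)
  finally show ?thesis .
next
  case False
  have "TT a b s \<le> (\<integral>\<^sup>+z. ennreal (Fb a b (fst z) * Fb a b (snd z) * fst z powr (s/2) * snd z powr (s/2)) \<partial>(lborel \<Otimes>\<^sub>M lborel))"
    unfolding TT_def
  proof (intro nn_integral_mono)
    fix z :: "real \<times> real"
    obtain x y where z: "z = (x,y)" by (cases z)
    show "ennreal (Fb a b (fst z) * Fb a b (snd z) * (fst z + snd z) powr s) \<le> ennreal (Fb a b (fst z) * Fb a b (snd z) * fst z powr (s/2) * snd z powr (s/2))"
    proof (cases "0 < x \<and> 0 < y")
      case True
      have "Fb a b x * Fb a b y * (x + y) powr s \<le> Fb a b x * Fb a b y * (x powr (s/2) * y powr (s/2))"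
        using True False by (intro mult_left_mono powr_sum_le_neg) (auto simp: Fb_nonneg)
      then show ?thesis unfolding z by (intro ennreal_leI) (simp add: mult_ac)
    next
      case False
      then show ?thesis unfolding z by (auto simp: Fb_def)
    qed
  qed
  also have "\<dots> < \<infinity>" using assms False by (intro fin_P) auto
  finally show ?thesis .
qed

lemma powr_between:
  fixes u v y e :: real
  assumes "0 < u" "u \<le> y" "y \<le> v"
  shows "min (u powr e) (v powr e) \<le> y powr e"
proof (cases "0 \<le> e")
  case True
  then have "u powr e \<le> y powr e" using assms by (intro powr_mono2) auto
  then show ?thesis by linarith
next
  case False
  then have "v powr e \<le> y powr e" using assms by (intro powr_mono2') auto
  then show ?thesis by linarith
qed

lemma lbF1:
  assumes "0 < a" "0 < b" "1 \<le> x"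
  shows "2 powr (-(a+b)) * x powr (-b-1) \<le> Fb a b x"
proof -
  have x: "0 < x" using assms by simp
  have "(1+x) powr (a+b) \<le> (2*x) powr (a+b)" using assms by (intro powr_mono2) auto
  also have "\<dots> = 2 powr (a+b) * x powr (a+b)" using x by (simp add: powr_mult)
  finally have d: "(1+x) powr (a+b) \<le> 2 powr (a+b) * x powr (a+b)" .
  have e1: "2 powr (-(a+b)) * 2 powr (a+b) = 1" by (simp add: powr_add[symmetric])
  have e2: "x powr (-b-1) * x powr (a+b) = x powr (a-1)" using powr_add[of x "-b-1" "a+b"] by simp
  have "2 powr (-(a+b)) * x powr (-b-1) * (2 powr (a+b) * x powr (a+b))
      = (2 powr (-(a+b)) * 2 powr (a+b)) * (x powr (-b-1) * x powr (a+b))" by (simp only: ac_simps)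
  also have "\<dots> = x powr (a-1)" using e1 e2 by simp
  finally have "2 powr (-(a+b)) * x powr (-b-1) = x powr (a-1) / (2 powr (a+b) * x powr (a+b))"
    using x by (simp add: eq_divide_eq)
  also have "\<dots> \<le> x powr (a-1) / (1+x) powr (a+b)"
    using d x by (intro divide_left_mono) auto
  also have "\<dots> = Fb a b x" using x by (simp add: Fb_def)
  finally show ?thesis .
qed

lemma lbF_small:
  assumes "0 < a" "0 < b" "0 < x" "x \<le> 1"
  shows "2 powr (-(a+b)) * x powr (a-1) \<le> Fb a b x"
proof -
  have "(1+x) powr (a+b) \<le> 2 powr (a+b)" using assms by (intro powr_mono2) auto
  then have "x powr (a-1) / 2 powr (a+b) \<le> x powr (a-1) / (1+x) powr (a+b)"
    using assms by (intro divide_left_mono) auto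
  moreover have "2 powr (-(a+b)) * x powr (a-1) = x powr (a-1) / 2 powr (a+b)"
    unfolding powr_minus_divide[of 2 "a+b"] by simp
  ultimately show ?thesis using assms by (simp add: Fb_def)
qed

lemma lbF2:
  assumes "0 < a" "0 < b" "1 \<le> y" "y \<le> 2"
  shows "min 1 (2 powr (a-1)) / 3 powr (a+b) \<le> Fb a b y"
proof -
  have "min (1 powr (a-1)) (2 powr (a-1)) \<le> y powr (a-1)"
    using assms by (intro powr_between) auto
  then have n: "min 1 (2 powr (a-1)) \<le> y powr (a-1)" by simp
  have "(1+y) powr (a+b) \<le> 3 powr (a+b)" using assms by (intro powr_mono2) auto
  then have "min 1 (2 powr (a-1)) / 3 powr (a+b) \<le> y powr (a-1) / (1+y) powr (a+b)"
    using assms n by (intro frac_le) auto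
  then show ?thesis using assms by (simp add: Fb_def)
qed

lemma TT_inf_hi:
  assumes "0 < a" "0 < b" "b \<le> s"
  shows "TT a b s = \<infinity>"
proof -
  define m where "m = min 1 (2 powr (a-1)) / 3 powr (a+b)"
  define K where "K = 2 powr (-(a+b)) * m"
  have m: "0 < m" unfolding m_def by simp
  have K: "0 < K" unfolding K_def using m by simp
  define L where "L = (\<lambda>z::real\<times>real. ennreal (if 1 \<le> fst z \<and> 1 \<le> snd z \<and> snd z \<le> 2 then K * (1 / fst z) else 0))"
  have Lm[measurable]: "L \<in> borel_measurable (lborel \<Otimes>\<^sub>M lborel)" unfolding L_def by measurable
  have I1: "(\<integral>\<^sup>+z. L z \<partial>(lborel \<Otimes>\<^sub>M lborel)) \<le> TT a b s"
    unfolding TT_def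
  proof (intro nn_integral_mono)
    fix z :: "real \<times> real"
    obtain x y where z: "z = (x,y)" by (cases z)
    show "L z \<le> ennreal (Fb a b (fst z) * Fb a b (snd z) * (fst z + snd z) powr s)"
    proof (cases "1 \<le> x \<and> 1 \<le> y \<and> y \<le> 2")
      case False then show ?thesis by (auto simp: L_def z)
    next
      case True
      have h1: "2 powr (-(a+b)) * x powr (-b-1) \<le> Fb a b x" using True assms by (intro lbF1) auto
      have h2: "m \<le> Fb a b y" unfolding m_def using True assms by (intro lbF2) auto
      have h3: "x powr s \<le> (x + y) powr s" using True assms by (intro powr_mono2) auto
      have "(2 powr (-(a+b)) * x powr (-b-1)) * m * x powr s \<le> Fb a b x * Fb a b y * (x + y) powr s"
        using h1 h2 h3 m by (intro mult_mono) (auto simp: Fb_nonneg)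
      moreover have "(2 powr (-(a+b)) * x powr (-b-1)) * m * x powr s = K * x powr (-b-1+s)"
        unfolding K_def by (simp add: powr_add)
      moreover have "x powr (-1) \<le> x powr (-b-1+s)" using True assms by (intro powr_mono) auto
      moreover have "x powr (-1) = 1 / x" using True by (simp add: powr_minus_divide)
      ultimately have "K * (1 / x) \<le> Fb a b x * Fb a b y * (x + y) powr s"
        using K by (smt (verit) mult_left_mono)
      then show ?thesis using True by (auto simp: L_def z intro!: ennreal_leI)
    qed
  qed
  have I2: "(\<integral>\<^sup>+z. L z \<partial>(lborel \<Otimes>\<^sub>M lborel)) = (\<integral>\<^sup>+x. \<integral>\<^sup>+y. L (x,y) \<partial>lborel \<partial>lborel)"
    using sigma_finite_measure.nn_integral_fst[OF sigma_finite_lborel Lm] by simp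
  have I3: "(\<integral>\<^sup>+x. \<integral>\<^sup>+y. L (x,y) \<partial>lborel \<partial>lborel) = (\<integral>\<^sup>+x. ennreal K * ennreal (indicator {1..} x * (1/x)) \<partial>lborel)"
  proof (intro nn_integral_cong)
    fix x :: real
    show "(\<integral>\<^sup>+y. L (x,y) \<partial>lborel) = ennreal K * ennreal (indicator {1..} x * (1/x))"
    proof (cases "1 \<le> x")
      case False then show ?thesis by (simp add: L_def)
    next
      case True
      have "(\<integral>\<^sup>+y. L (x,y) \<partial>lborel) = (\<integral>\<^sup>+y. ennreal (K * (1/x)) * indicator {1..2::real} y \<partial>lborel)"
        by (intro nn_integral_cong) (auto simp: L_def True indicator_def)
      also have "\<dots> = ennreal (K * (1/x))" by (subst nn_integral_cmult_indicator) auto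
      also have "\<dots> = ennreal K * ennreal (1/x)" using True K by (subst ennreal_mult'[symmetric]) auto
      finally show ?thesis using True by simp
    qed
  qed
  have I4: "(\<integral>\<^sup>+x. ennreal K * ennreal (indicator {1..} x * (1/x)) \<partial>lborel) = ennreal K * \<infinity>"
    by (subst nn_integral_cmult) (auto simp: inv_div_1[simplified])
  have I5: "ennreal K * \<infinity> = \<infinity>" using K by (simp add: ennreal_mult_top)
  have "\<infinity> \<le> TT a b s" using I1 unfolding I2 I3 I4 I5 .
  then show ?thesis by (simp add: top_unique)
qed

lemma TT_inf_lo:
  assumes "0 < a" "0 < b" "s \<le> -2*a"
  shows "TT a b s = \<infinity>"
proof -
  define m2 where "m2 = min 1 ((1/2) powr (a-1))"
  define K where "K = 2 powr (-(a+b)) * (2 powr (-(a+b)) * m2) * 2 powr s"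
  have m2: "0 < m2" unfolding m2_def by simp
  have K: "0 < K" unfolding K_def using m2 by simp
  define L where "L = (\<lambda>z::real\<times>real. ennreal (if 0 < fst z \<and> fst z \<le> 1 \<and> fst z / 2 \<le> snd z \<and> snd z \<le> fst z then K / (fst z)^2 else 0))"
  have Lm[measurable]: "L \<in> borel_measurable (lborel \<Otimes>\<^sub>M lborel)" unfolding L_def by measurable
  have I1: "(\<integral>\<^sup>+z. L z \<partial>(lborel \<Otimes>\<^sub>M lborel)) \<le> TT a b s"
    unfolding TT_def
  proof (intro nn_integral_mono)
    fix z :: "real \<times> real"
    obtain x y where z: "z = (x,y)" by (cases z)
    show "L z \<le> ennreal (Fb a b (fst z) * Fb a b (snd z) * (fst z + snd z) powr s)"
    proof (cases "0 < x \<and> x \<le> 1 \<and> x / 2 \<le> y \<and> y \<le> x")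
      case False then show ?thesis by (auto simp: L_def z)
    next
      case True
      then have x: "0 < x" "x \<le> 1" and y: "0 < y" "y \<le> 1" "x/2 \<le> y" "y \<le> x" by auto
      have h1: "2 powr (-(a+b)) * x powr (a-1) \<le> Fb a b x" using x assms by (intro lbF_small) auto
      have "min ((x/2) powr (a-1)) (x powr (a-1)) \<le> y powr (a-1)"
        using x y by (intro powr_between) auto
      moreover have "(x/2) powr (a-1) = x powr (a-1) * (1/2) powr (a-1)"
        using x powr_mult[of x "1/2" "a-1"] by simp
      moreover have "m2 * x powr (a-1) \<le> x powr (a-1) * (1/2) powr (a-1)"
        unfolding m2_def by (simp add: mult.commute mult_left_mono)
      moreover have "m2 * x powr (a-1) \<le> x powr (a-1)"
        unfolding m2_def by (simp add: mult_left_le_one_le)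
      ultimately have yy: "m2 * x powr (a-1) \<le> y powr (a-1)" by linarith
      have "2 powr (-(a+b)) * y powr (a-1) \<le> Fb a b y" using y assms by (intro lbF_small) auto
      then have h2: "2 powr (-(a+b)) * m2 * x powr (a-1) \<le> Fb a b y"
        using yy by (smt (verit) mult.assoc mult_left_mono powr_ge_zero)
      have "(2 * x) powr s \<le> (x + y) powr s" using x y assms by (intro powr_mono2') auto
      then have h3: "2 powr s * x powr s \<le> (x + y) powr s" using x by (simp add: powr_mult)
      have A: "(2 powr (-(a+b)) * x powr (a-1)) * (2 powr (-(a+b)) * m2 * x powr (a-1)) * (2 powr s * x powr s)
           \<le> Fb a b x * Fb a b y * (x + y) powr s"
        using h1 h2 h3 m2 by (intro mult_mono) (auto simp: Fb_nonneg)
      have B: "(2 powr (-(a+b)) * x powr (a-1)) * (2 powr (-(a+b)) * m2 * x powr (a-1)) * (2 powr s * x powr s)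
           = K * x powr ((a-1) + (a-1) + s)"
      proof -
        have px: "x powr ((a-1) + (a-1) + s) = x powr (a-1) * x powr (a-1) * x powr s" by (simp only: powr_add)
        show ?thesis unfolding K_def px by (simp only: mult_ac)
      qed
      have C: "x powr (-2) \<le> x powr ((a-1) + (a-1) + s)" using x assms by (intro powr_mono') auto
      have D: "x powr (-2) = 1 / x^2" using x by (simp add: powr_minus_divide)
      have "K / x^2 = K * x powr (-2)" using D by simp
      also have "\<dots> \<le> K * x powr ((a-1) + (a-1) + s)" using C K by (intro mult_left_mono) auto
      also have "\<dots> \<le> Fb a b x * Fb a b y * (x + y) powr s" using A B by simp
      finally have "K / x^2 \<le> Fb a b x * Fb a b y * (x + y) powr s" .
      then show ?thesis using True by (auto simp: L_def z intro!: ennreal_leI)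
    qed
  qed
  have I2: "(\<integral>\<^sup>+z. L z \<partial>(lborel \<Otimes>\<^sub>M lborel)) = (\<integral>\<^sup>+x. \<integral>\<^sup>+y. L (x,y) \<partial>lborel \<partial>lborel)"
    using sigma_finite_measure.nn_integral_fst[OF sigma_finite_lborel Lm] by simp
  have I3: "(\<integral>\<^sup>+x. \<integral>\<^sup>+y. L (x,y) \<partial>lborel \<partial>lborel) = (\<integral>\<^sup>+x. ennreal (K/2) * ennreal (indicator {0<..1} x * (1/x)) \<partial>lborel)"
  proof (intro nn_integral_cong)
    fix x :: real
    show "(\<integral>\<^sup>+y. L (x,y) \<partial>lborel) = ennreal (K/2) * ennreal (indicator {0<..1} x * (1/x))"
    proof (cases "0 < x \<and> x \<le> 1")
      case False then show ?thesis by (auto simp: L_def indicator_def)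
    next
      case True
      have "(\<integral>\<^sup>+y. L (x,y) \<partial>lborel) = (\<integral>\<^sup>+y. ennreal (K / x^2) * indicator {x/2..x} y \<partial>lborel)"
        by (intro nn_integral_cong) (auto simp: L_def True indicator_def)
      also have "\<dots> = ennreal (K / x^2) * ennreal (x - x/2)" using True by (subst nn_integral_cmult_indicator) auto
      also have "\<dots> = ennreal (K / x^2 * (x - x/2))" using True K by (subst ennreal_mult'[symmetric]) auto
      also have "K / x^2 * (x - x/2) = K/2 * (1/x)" using True by (simp add: field_simps power2_eq_square)
      also have "\<dots> = ennreal (K/2) * ennreal (1/x)" using True K by (subst ennreal_mult'[symmetric]) auto
      finally show ?thesis using True by simp
    qed
  qed
  have I4: "(\<integral>\<^sup>+x. ennreal (K/2) * ennreal (indicator {0<..1} x * (1/x)) \<partial>lborel) = ennreal (K/2) * \<infinity>"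
    by (subst nn_integral_cmult) (auto simp: inv_div_0[simplified])
  have I5: "ennreal (K/2) * \<infinity> = \<infinity>" using K by (simp add: ennreal_mult_top)
  have "\<infinity> \<le> TT a b s" using I1 unfolding I2 I3 I4 I5 .
  then show ?thesis by (simp add: top_unique)
qed


theorem proposition4:
  fixes a b s :: real
  assumes "0 < a" and "0 < b"
  shows "Mab a b s < \<infinity> \<longleftrightarrow> (-2 * a < s \<and> s < b)"
proof -
  define C where "C = (Gamma (a+b) / (Gamma a * Gamma b))^2"
  have "0 < Gamma (a+b)" "0 < Gamma a" "0 < Gamma b" using assms by (auto intro!: Gamma_real_pos)
  then have C: "0 < C" unfolding C_def by simp
  have eq: "Mab a b s = ennreal C * TT a b s" unfolding C_def using Mab_TT[OF assms] .
  show ?thesis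
  proof
    assume fin: "Mab a b s < \<infinity>"
    have "TT a b s < \<infinity>"
      using fin C unfolding eq by (auto simp: ennreal_mult_less_top)
    show "-2 * a < s \<and> s < b"
    proof (rule ccontr)
      assume "\<not> (-2 * a < s \<and> s < b)"
      then have "s \<le> -2 * a \<or> b \<le> s" by linarith
      then have "TT a b s = \<infinity>" using TT_inf_hi[OF assms, of s] TT_inf_lo[OF assms, of s] by blast
      then show False using \<open>TT a b s < \<infinity>\<close> by simp
    qed
  next
    assume "-2 * a < s \<and> s < b"
    then have "TT a b s < \<infinity>" using TT_fin[OF assms] by auto
    then show "Mab a b s < \<infinity>" unfolding eq by (simp add: ennreal_mult_less_top)
  qed
qed

end
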